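(* Let $n>1$ be odd, and let $R\subseteq (A_n)^{3n}$ be the set of all tuples $((1,x_1),(2,x_2),\dots,(n,x_n),(1,x_{n+1}),\dots,(n,x_{2n}),(1,x_{2n+1}),\dots,(n,x_{3n}))$ (i.e. the $j$-th entry is $(((j-1)\bmod n)+1,\,x_j)$) with $x_j\in\{0,1,2,3\}$ such that $x_{kn+1}\equiv x_{kn+2}\equiv\dots\equiv x_{kn+n}\pmod 2$ for each $k=0,1,2$, and $\sum_{i=1}^{3n}x_i\equiv 2\pmod 4$. Then $R$ is a subuniverse of $(\mathbf{A}_n)^{3n}$, i.e. it is closed under coordinatewise application of each $t_i$.
   Context: Let $[n]=\{1,\dots,n\}$ and let $m$ be the minority operation on $[n]$ given by $m(x,y,z)=x$ if $y=z$, $m(x,y,z)=y$ if $x=z$, and $m(x,y,z)=z$ otherwise. On $\{0,1,2,3\}$, $+,-$ denote arithmetic modulo 4 and $\oplus$ denotes bitwise XOR of 2-bit binary representations. Let $A_n=[n]\times\{0,1,2,3\}$. For $i\in[n]$ define the ternary operation $t_i$ on $A_n$ by $t_i((a_1,b_1),(a_2,b_2),(a_3,b_3))=(i,\,b_1-b_2+b_3)$ if $a_1=a_2=a_3=i$, and $=(m(a_1,a_2,a_3),\,b_1\oplus b_2\oplus b_3)$ otherwise. The algebra $\mathbf{A}_n$ has universe $A_n$ and basic operations $t_1,\dots,t_n$. *)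

theory Defs
  imports Main
begin

definition minority :: "nat \<Rightarrow> nat \<Rightarrow> nat \<Rightarrow> nat" where
  "minority x y z = (if y = z then x else if x = z then y else z)"

definition A :: "nat \<Rightarrow> (nat \<times> nat) set" where
  "A n = {1..n} \<times> {0..3}"

definition t :: "nat \<Rightarrow> nat \<times> nat \<Rightarrow> nat \<times> nat \<Rightarrow> nat \<times> nat \<Rightarrow> nat \<times> nat" where
  "t i p q r = (let (a1,b1) = p; (a2,b2) = q; (a3,b3) = r in
     if a1 = i \<and> a2 = i \<and> a3 = i
     then (i, nat ((int b1 - int b2 + int b3) mod 4))
     else (minority a1 a2 a3, xor (xor b1 b2) b3))"

(* R as a set of lists of length 3n; list index j (0-based) corresponds to entry j+1 *)
definition R :: "nat \<Rightarrow> (nat \<times> nat) list set" where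
  "R n = {v. length v = 3 * n \<and>
          (\<exists>x :: nat list. length x = 3 * n \<and> (\<forall>j < 3 * n. x ! j \<in> {0..3}) \<and>
             (\<forall>j < 3 * n. v ! j = (j mod n + 1, x ! j)) \<and>
             (\<forall>k < 3. \<forall>i < n. \<forall>i' < n. x ! (k * n + i) mod 2 = x ! (k * n + i') mod 2) \<and>
             (\<Sum>j < 3 * n. x ! j) mod 4 = 2)}"

end

theory Submission
  imports Defs
begin

lemma lt4: "(a::nat) < 4 \<Longrightarrow> a = 0 \<or> a = 1 \<or> a = 2 \<or> a = 3" by auto

lemma m3: "((p::nat)+q+s) mod 2 = (p mod 2 + q mod 2 + s mod 2) mod 2"
proof -
  have "(p+q+s) mod 2 = ((p+q) mod 2 + s mod 2) mod 2" by (rule mod_add_eq[symmetric])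
  also have "(p+q) mod 2 = (p mod 2 + q mod 2) mod 2" by (rule mod_add_eq[symmetric])
  also have "((p mod 2 + q mod 2) mod 2 + s mod 2) mod 2 = (p mod 2 + q mod 2 + s mod 2) mod 2"
    by (rule mod_add_left_eq)
  finally show ?thesis .
qed
lemma mod4e: "(s::nat) mod 4 = 2 \<Longrightarrow> even s" using mod_mod_cancel[of 2 4 s] by (simp add: even_iff_mod_2_eq_zero)

definition cr :: "nat \<Rightarrow> nat \<Rightarrow> nat \<Rightarrow> nat" where
  "cr a b c = (if 2 \<le> a mod 2 + b mod 2 + c mod 2 then 1 else 0)"

lemma P: assumes "(a::nat) < 4" "b < 4" "c < 4"
  shows "xor (xor a b) c < 4 \<and> xor (xor a b) c mod 2 = (a+b+c) mod 2 \<and>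
   (xor (xor a b) c + 2 * cr a b c) mod 4 = (a+b+c) mod 4"
  unfolding cr_def using lt4[OF assms(1)] lt4[OF assms(2)] lt4[OF assms(3)] by auto
lemma Q: assumes "(a::nat) < 4" "b < 4" "c < 4"
  shows "nat ((int a - int b + int c) mod 4) < 4 \<and> nat ((int a - int b + int c) mod 4) mod 2 = (a+b+c) mod 2 \<and>
   (nat ((int a - int b + int c) mod 4) + 2 * b) mod 4 = (a+b+c) mod 4"
  using lt4[OF assms(1)] lt4[OF assms(2)] lt4[OF assms(3)] by auto

lemma blk: fixes g :: "nat \<Rightarrow> nat"
  assumes "odd n" "pp<n" "even (g pp)" "\<forall>m<n. m\<noteq>pp \<longrightarrow> g m mod 2 = c"
  shows "even (\<Sum>m<n. g m)"
proof (cases "c = 0")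
  case True
  then have h: "{m\<in>{..<n}. odd (g m)} = {}" using assms by auto
  show ?thesis unfolding even_sum_iff[OF finite_lessThan] h by simp
next
  case False
  then have h: "{m\<in>{..<n}. odd (g m)} = {..<n} - {pp}" using assms by auto
  show ?thesis unfolding even_sum_iff[OF finite_lessThan] h using assms by simp
qed
lemma split3: "(\<Sum>j<3*n. (g::nat\<Rightarrow>nat) j) = (\<Sum>k<3. \<Sum>m<n. (g (k*n+m)::nat))"
proof -
  have "(\<Sum>j<3*n. g j) = (\<Sum>k<3. sum g {k*n..<k*n+n})" using sum.nat_group[of g n 3] by simp
  also have "\<dots> = (\<Sum>k<3. \<Sum>m<n. (g (k*n+m)::nat))"
  proof (rule sum.cong[OF refl])
    fix k
    show "sum g {k*n..<k*n+n} = (\<Sum>m<n. g (k*n+m))"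
      using sum.shift_bounds_nat_ivl[of g 0 "k*n" n] by (simp add: atLeast0LessThan add.commute)
  qed
  finally show ?thesis .
qed

lemma Rget:
  assumes "u \<in> R n"
  obtains x where "length x = 3 * n" "\<forall>j < 3 * n. x ! j < 4"
    "u = map (\<lambda>j. (j mod n + 1, x ! j)) [0..<3*n]"
    "\<forall>k < 3. \<forall>i < n. \<forall>i' < n. x ! (k * n + i) mod 2 = x ! (k * n + i') mod 2"
    "(\<Sum>j < 3 * n. x ! j) mod 4 = 2"
proof -
  from assms obtain x where x: "length u = 3*n" "length x = 3 * n" "(\<forall>j < 3 * n. x ! j \<in> {0..3})"
             "(\<forall>j < 3 * n. u ! j = (j mod n + 1, x ! j))"
             "(\<forall>k < 3. \<forall>i < n. \<forall>i' < n. x ! (k * n + i) mod 2 = x ! (k * n + i') mod 2)"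
             "(\<Sum>j < 3 * n. x ! j) mod 4 = 2" unfolding R_def by blast
  have "u = map (\<lambda>j. (j mod n + 1, x ! j)) [0..<3*n]"
    by (rule nth_equalityI) (use x in auto)
  moreover have "\<forall>j < 3 * n. x ! j < 4" using x(3) by fastforce
  ultimately show ?thesis using that x by blast
qed

theorem mainTheorem7:
  fixes n :: nat
  assumes "n > 1" and "odd n"
  shows "R n \<subseteq> lists (A n) \<and>
         (\<forall>i \<in> {1..n}. \<forall>u \<in> R n. \<forall>v \<in> R n. \<forall>w \<in> R n.
            map (\<lambda>j. t i (u ! j) (v ! j) (w ! j)) [0..<3 * n] \<in> R n)"
proof
  show "R n \<subseteq> lists (A n)"
  proof
    fix u assume "u \<in> R n"
    then obtain x where x: "length x = 3 * n" "\<forall>j < 3 * n. x ! j < 4"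
      "u = map (\<lambda>j. (j mod n + 1, x ! j)) [0..<3*n]" by (rule Rget)
    have "set u \<subseteq> A n" using x assms(1) by (auto simp: A_def Suc_le_eq)
    then show "u \<in> lists (A n)" by auto
  qed
next
  show "\<forall>i \<in> {1..n}. \<forall>u \<in> R n. \<forall>v \<in> R n. \<forall>w \<in> R n.
            map (\<lambda>j. t i (u ! j) (v ! j) (w ! j)) [0..<3 * n] \<in> R n"
  proof (intro ballI)
    fix i u v w assume i: "i \<in> {1..n}" and uvw: "u \<in> R n" "v \<in> R n" "w \<in> R n"
    obtain x where x: "length x = 3 * n" "\<forall>j < 3 * n. x ! j < 4"
      "u = map (\<lambda>j. (j mod n + 1, x ! j)) [0..<3*n]"
      "\<forall>k < 3. \<forall>i < n. \<forall>i' < n. x ! (k * n + i) mod 2 = x ! (k * n + i') mod 2"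
      "(\<Sum>j < 3 * n. x ! j) mod 4 = 2" using uvw(1) by (rule Rget)
    obtain y where y: "length y = 3 * n" "\<forall>j < 3 * n. y ! j < 4"
      "v = map (\<lambda>j. (j mod n + 1, y ! j)) [0..<3*n]"
      "\<forall>k < 3. \<forall>i < n. \<forall>i' < n. y ! (k * n + i) mod 2 = y ! (k * n + i') mod 2"
      "(\<Sum>j < 3 * n. y ! j) mod 4 = 2" using uvw(2) by (rule Rget)
    obtain z where z: "length z = 3 * n" "\<forall>j < 3 * n. z ! j < 4"
      "w = map (\<lambda>j. (j mod n + 1, z ! j)) [0..<3*n]"
      "\<forall>k < 3. \<forall>i < n. \<forall>i' < n. z ! (k * n + i) mod 2 = z ! (k * n + i') mod 2"
      "(\<Sum>j < 3 * n. z ! j) mod 4 = 2" using uvw(3) by (rule Rget)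
    define r where "r j = (if j mod n + 1 = i then nat ((int (x!j) - int (y!j) + int (z!j)) mod 4)
         else xor (xor (x!j) (y!j)) (z!j))" for j
    define e where "e j = (if j mod n + 1 = i then y!j else cr (x!j) (y!j) (z!j))" for j
    have req: "map (\<lambda>j. t i (u ! j) (v ! j) (w ! j)) [0..<3 * n] = map (\<lambda>j. (j mod n + 1, r j)) [0..<3*n]"
      using x(3) y(3) z(3) by (auto simp: t_def minority_def r_def)
    have r4: "r j < 4" if "j < 3*n" for j
      using P[OF x(2)[rule_format, OF that] y(2)[rule_format, OF that] z(2)[rule_format, OF that]]
            Q[OF x(2)[rule_format, OF that] y(2)[rule_format, OF that] z(2)[rule_format, OF that]]
      by (simp add: r_def)
    have rpar: "r j mod 2 = (x!j + y!j + z!j) mod 2" if "j < 3*n" for j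
      using P[OF x(2)[rule_format, OF that] y(2)[rule_format, OF that] z(2)[rule_format, OF that]]
            Q[OF x(2)[rule_format, OF that] y(2)[rule_format, OF that] z(2)[rule_format, OF that]]
      by (simp add: r_def)
    have rmod: "(r j + 2 * e j) mod 4 = (x!j + y!j + z!j) mod 4" if "j < 3*n" for j
      using P[OF x(2)[rule_format, OF that] y(2)[rule_format, OF that] z(2)[rule_format, OF that]]
            Q[OF x(2)[rule_format, OF that] y(2)[rule_format, OF that] z(2)[rule_format, OF that]]
      by (simp add: r_def e_def)
    have blockc: "x ! (k*n+m) mod 2 = x ! (k*n) mod 2"
      if "\<forall>k < 3. \<forall>i < n. \<forall>i' < n. x ! (k * n + i) mod 2 = x ! (k * n + i') mod 2" "k < 3" "m < n"
      for x :: "nat list" and k m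
    proof -
      have "0 < n" using assms(1) by simp
      from that(1)[rule_format, OF that(2) that(3) this] show ?thesis by simp
    qed
    have sumr: "(\<Sum>j<3*n. r j) mod 4 = 2"
    proof -
      have geven: "even (\<Sum>m<n. e (k*n+m) + y!(k*n+m))" if k: "k < 3" for k
      proof (rule blk[where pp = "i - 1" and c = "(cr (x!(k*n)) (y!(k*n)) (z!(k*n)) + y!(k*n)) mod 2"])
        show "odd n" by fact
        show "i - 1 < n" using i by auto
        have "(k*n + (i-1)) mod n + 1 = i" unfolding mod_mult_self3 using i by auto
        then have "e (k*n+(i-1)) = y!(k*n+(i-1))" unfolding e_def by (simp only: simp_thms if_True)
        then show "even (e (k * n + (i - 1)) + y ! (k * n + (i - 1)))" by (simp only:) simp
        show "\<forall>m<n. m \<noteq> i - 1 \<longrightarrow> (e (k * n + m) + y ! (k * n + m)) mod 2 =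
            (cr (x ! (k * n)) (y ! (k * n)) (z ! (k * n)) + y ! (k * n)) mod 2"
        proof (intro allI impI)
          fix m assume m: "m < n" "m \<noteq> i - 1"
          then have "(k*n+m) mod n + 1 \<noteq> i" using i by auto
          then have ee: "e (k*n+m) = cr (x!(k*n+m)) (y!(k*n+m)) (z!(k*n+m))" by (simp add: e_def)
          have xe: "x ! (k*n+m) mod 2 = x ! (k*n) mod 2" by (rule blockc[OF x(4) k m(1)])
          have ye: "y ! (k*n+m) mod 2 = y ! (k*n) mod 2" by (rule blockc[OF y(4) k m(1)])
          have ze: "z ! (k*n+m) mod 2 = z ! (k*n) mod 2" by (rule blockc[OF z(4) k m(1)])
          have ce: "cr (x!(k*n+m)) (y!(k*n+m)) (z!(k*n+m)) = cr (x!(k*n)) (y!(k*n)) (z!(k*n))"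
            by (simp only: cr_def xe ye ze)
          show "(e (k * n + m) + y ! (k * n + m)) mod 2 =
            (cr (x ! (k * n)) (y ! (k * n)) (z ! (k * n)) + y ! (k * n)) mod 2"
            unfolding ee ce by (metis mod_add_right_eq ye)
        qed
      qed
      have "even (\<Sum>j<3*n. e j + y!j)"
        unfolding split3 by (rule dvd_sum) (use geven in auto)
      moreover have "even (\<Sum>j<3*n. y!j)" using y(5)
        by (metis mod4e)
      ultimately have ee: "even (\<Sum>j<3*n. e j)" by (simp add: sum.distrib)
      have sc: "(\<Sum>j<3*n. (r j + 2 * e j) mod 4) = (\<Sum>j<3*n. (x!j + y!j + z!j) mod 4)"
        by (rule sum.cong) (auto simp: rmod)
      have "(\<Sum>j<3*n. r j + 2 * e j) mod 4 = (\<Sum>j<3*n. (r j + 2 * e j) mod 4) mod 4"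
        by (rule mod_sum_eq[symmetric])
      also have "\<dots> = (\<Sum>j<3*n. (x!j + y!j + z!j) mod 4) mod 4" by (simp only: sc)
      also have "\<dots> = (\<Sum>j<3*n. x!j + y!j + z!j) mod 4" by (rule mod_sum_eq)
      also have "\<dots> = ((\<Sum>j<3*n. x!j) + (\<Sum>j<3*n. y!j) + (\<Sum>j<3*n. z!j)) mod 4"
        by (simp add: sum.distrib)
      also have "\<dots> = 2" using x(5) y(5) z(5) by (simp add: mod_add_eq[symmetric])
      finally have h: "((\<Sum>j<3*n. r j) + 2 * (\<Sum>j<3*n. e j)) mod 4 = 2"
        by (simp add: sum.distrib sum_distrib_left)
      from ee obtain q where "(\<Sum>j<3*n. e j) = 2 * q" by blast
      with h show ?thesis by simp
    qed
    show "map (\<lambda>j. t i (u ! j) (v ! j) (w ! j)) [0..<3 * n] \<in> R n"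
      unfolding req R_def
    proof (intro CollectI conjI exI[of _ "map r [0..<3*n]"])
      show "\<forall>k<3. \<forall>i<n. \<forall>i'<n. map r [0..<3 * n] ! (k * n + i) mod 2 = map r [0..<3 * n] ! (k * n + i') mod 2"
      proof (intro allI impI)
        fix k a b :: nat assume k: "k < 3" and a: "a < n" and b: "b < n"
        have "k*n \<le> 2*n" using k by (intro mult_le_mono1) simp
        then have ka: "k*n + a < 3*n" "k*n+b < 3*n" using a b by linarith+
        have "r (k*n+a) mod 2 = (x!(k*n+a) mod 2 + y!(k*n+a) mod 2 + z!(k*n+a) mod 2) mod 2"
          unfolding m3[symmetric] by (rule rpar[OF ka(1)])
        also have "\<dots> = (x!(k*n+b) mod 2 + y!(k*n+b) mod 2 + z!(k*n+b) mod 2) mod 2"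
          using x(4)[rule_format, OF k a b] y(4)[rule_format, OF k a b] z(4)[rule_format, OF k a b] by simp
        also have "\<dots> = r (k*n+b) mod 2"
          unfolding m3[symmetric] using rpar[OF ka(2)] by (rule sym)
        finally show "map r [0..<3 * n] ! (k * n + a) mod 2 = map r [0..<3 * n] ! (k * n + b) mod 2"
          using ka by simp
      qed
    next
      show "(\<Sum>j<3 * n. map r [0..<3 * n] ! j) mod 4 = 2"
        using sumr by (simp add: sum.cong[OF refl, of "{..<3*n}" "\<lambda>j. map r [0..<3 * n] ! j" r])
    next
      show "\<forall>j<3 * n. map r [0..<3 * n] ! j \<in> {0..3}"
      proof (intro allI impI)
        fix j assume jj: "j < 3*n"
        then have "r j < 4" by (rule r4)
        then show "map r [0..<3 * n] ! j \<in> {0..3}" using jj by simp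
      qed
    qed simp_all
  qed
qed

end
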